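(* Let $\phi:\mathbf{R}^n\to\mathbf{R}$ be a uniformly convex norm of class $\mathcal{C}^2$ on $\mathbf{R}^n\setminus\{0\}$, $K\subseteq\mathbf{R}^n$ closed, $0<s<t<\infty$, $1<\lambda<\infty$, and $K_{\lambda,s,t}=\{x:\rho^\phi_K(x)\ge\lambda,\ s\le\delta^\phi_K(x)\le t\}$. Then there exists $\Gamma\in\mathbf{R}$ depending only on $s,t,\lambda,\phi$ such that $$\phi(\xi^\phi_K(a)-y)\le\Gamma\,\phi(a-b)$$ whenever $a\in K_{\lambda,s,t}$, $b\in\mathbf{R}^n$, $y\in\xi^\phi_K(b)$ and $\delta^\phi_K(b)\le t$. In particular $\xi^\phi_K|K_{\lambda,s,t}$ is Lipschitz continuous.
   Context: A norm $\phi$ on $\mathbf{R}^n$ is uniformly convex if there is $\gamma>0$ such that $x\mapsto\phi(x)-\gamma|x|$ is convex. For closed $K$: $\delta^\phi_K(x)=\inf\{\phi(y-x):y\in K\}$; $\xi^\phi_K(x)=K\cap\{w:\phi(x-w)=\delta^\phi_K(x)\}$ (on $K_{\lambda,s,t}$ this set is a singleton, identified with its element); $\rho^\phi_K(x)=\sup\bigl(\mathbf{R}\cap\{s':\delta^\phi_K(w+s'(x-w))=s'\delta^\phi_K(x)\}\bigr)$ for any $w\in\xi^\phi_K(x)$ (independent of the choice of $w$). *)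

theory Defs
  imports "HOL-Analysis.Analysis"
begin

definition is_norm_fun :: "('a::euclidean_space \<Rightarrow> real) \<Rightarrow> bool" where
  "is_norm_fun \<phi> \<longleftrightarrow>
     (\<forall>x. 0 \<le> \<phi> x) \<and> (\<forall>x. \<phi> x = 0 \<longleftrightarrow> x = 0) \<and>
     (\<forall>c x. \<phi> (c *\<^sub>R x) = \<bar>c\<bar> * \<phi> x) \<and>
     (\<forall>x y. \<phi> (x + y) \<le> \<phi> x + \<phi> y)"

definition uniformly_convex_norm :: "('a::euclidean_space \<Rightarrow> real) \<Rightarrow> bool" where
  "uniformly_convex_norm \<phi> \<longleftrightarrow> is_norm_fun \<phi> \<and>
     (\<exists>\<gamma>>0. convex_on UNIV (\<lambda>x. \<phi> x - \<gamma> * norm x))"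

definition C2_on :: "'a::euclidean_space set \<Rightarrow> ('a \<Rightarrow> real) \<Rightarrow> bool" where
  "C2_on S f \<longleftrightarrow>
     (\<exists>(f' :: 'a \<Rightarrow> 'a \<Rightarrow>\<^sub>L real) (f'' :: 'a \<Rightarrow> 'a \<Rightarrow>\<^sub>L ('a \<Rightarrow>\<^sub>L real)).
        (\<forall>x\<in>S. (f has_derivative blinfun_apply (f' x)) (at x)) \<and>
        (\<forall>x\<in>S. (f' has_derivative blinfun_apply (f'' x)) (at x)) \<and>
        continuous_on S f'')"

definition dist_fn :: "('a::euclidean_space \<Rightarrow> real) \<Rightarrow> 'a set \<Rightarrow> 'a \<Rightarrow> real" where
  "dist_fn \<phi> K x = Inf ((\<lambda>y. \<phi> (y - x)) ` K)"

definition nearest :: "('a::euclidean_space \<Rightarrow> real) \<Rightarrow> 'a set \<Rightarrow> 'a \<Rightarrow> 'a set" where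
  "nearest \<phi> K x = K \<inter> {w. \<phi> (x - w) = dist_fn \<phi> K x}"

text \<open>Reach function, valued in extended reals (the supremum may be +infinity);
  computed for an arbitrary chosen w in the nearest-point set.\<close>
definition reach_fn :: "('a::euclidean_space \<Rightarrow> real) \<Rightarrow> 'a set \<Rightarrow> 'a \<Rightarrow> ereal" where
  "reach_fn \<phi> K x =
     (let w = (SOME w. w \<in> nearest \<phi> K x) in
      Sup (ereal ` {s'::real. dist_fn \<phi> K (w + s' *\<^sub>R (x - w)) = s' * dist_fn \<phi> K x}))"

definition K_lst :: "('a::euclidean_space \<Rightarrow> real) \<Rightarrow> 'a set \<Rightarrow> real \<Rightarrow> real \<Rightarrow> real \<Rightarrow> 'a set" where
  "K_lst \<phi> K lam s t = {x. ereal lam \<le> reach_fn \<phi> K x \<and> s \<le> dist_fn \<phi> K x \<and> dist_fn \<phi> K x \<le> t}"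

end

theory Submission
  imports Defs
begin


locale unorm =
  fixes \<phi> :: "'a::euclidean_space \<Rightarrow> real" and \<gamma> :: real
  assumes nf: "is_norm_fun \<phi>" and gpos: "0 < \<gamma>"
    and conv: "convex_on UNIV (\<lambda>x. \<phi> x - \<gamma> * norm x)"
begin

lemma nonneg: "0 \<le> \<phi> x" using nf by (auto simp: is_norm_fun_def)
lemma zero_iff: "\<phi> x = 0 \<longleftrightarrow> x = 0" using nf by (auto simp: is_norm_fun_def)
lemma zero[simp]: "\<phi> 0 = 0" using zero_iff by simp
lemma scale: "\<phi> (c *\<^sub>R x) = \<bar>c\<bar> * \<phi> x" using nf by (auto simp: is_norm_fun_def)
lemma tri: "\<phi> (x + y) \<le> \<phi> x + \<phi> y" using nf by (auto simp: is_norm_fun_def)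
lemma neg[simp]: "\<phi> (- x) = \<phi> x" using scale[of "-1" x] by simp
lemma commute: "\<phi> (x - y) = \<phi> (y - x)" using neg[of "x - y"] by simp
lemma tri_diff: "\<phi> x - \<phi> y \<le> \<phi> (x - y)" using tri[of "x - y" y] by simp
lemma abs_diff: "\<bar>\<phi> x - \<phi> y\<bar> \<le> \<phi> (x - y)"
  using tri_diff[of x y] tri_diff[of y x] commute[of x y] by auto
lemma scale_pos: "0 \<le> c \<Longrightarrow> \<phi> (c *\<^sub>R x) = c * \<phi> x" using scale by simp

lemma sum_tri: "finite F \<Longrightarrow> \<phi> (\<Sum>b\<in>F. f b) \<le> (\<Sum>b\<in>F. \<phi> (f b))"
proof (induction rule: finite_induct)
  case (insert b F) thus ?case using tri[of "f b" "\<Sum>b\<in>F. f b"] by simp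
qed simp

definition "C = (\<Sum>b\<in>Basis. \<phi> b)"

lemma upper: "\<phi> x \<le> C * norm x"
proof -
  have "\<phi> x = \<phi> (\<Sum>b\<in>Basis. (x \<bullet> b) *\<^sub>R b)" by (simp add: euclidean_representation)
  also have "\<dots> \<le> (\<Sum>b\<in>Basis. \<phi> ((x \<bullet> b) *\<^sub>R b))"
    by (rule sum_tri) simp
  also have "\<dots> = (\<Sum>b\<in>Basis. \<bar>x \<bullet> b\<bar> * \<phi> b)" by (simp add: scale)
  also have "\<dots> \<le> (\<Sum>b\<in>Basis. norm x * \<phi> b)"
    by (intro sum_mono mult_right_mono Basis_le_norm nonneg) auto
  finally show ?thesis by (simp add: C_def sum_distrib_left mult.commute)
qed

lemma convI: "0 \<le> t \<Longrightarrow> t \<le> 1 \<Longrightarrow>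
   \<phi> ((1 - t) *\<^sub>R x + t *\<^sub>R y) - \<gamma> * norm ((1 - t) *\<^sub>R x + t *\<^sub>R y)
   \<le> (1 - t) * (\<phi> x - \<gamma> * norm x) + t * (\<phi> y - \<gamma> * norm y)"
  using convex_onD[OF conv, of t x y] by simp

lemma lower: "\<gamma> * norm x \<le> \<phi> x"
proof -
  let ?g = "\<lambda>x. \<phi> x - \<gamma> * norm x"
  have "?g ((1/2) *\<^sub>R x + (1/2) *\<^sub>R (-x)) \<le> (1/2) * ?g x + (1/2) * ?g (-x)"
    using convI[of "1/2" x "-x"] by simp
  thus ?thesis by simp
qed

lemma C_ge: "\<gamma> \<le> C"
proof -
  obtain b :: 'a where b: "b \<in> Basis" using nonempty_Basis by blast
  have "norm b = 1" using b by simp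
  thus ?thesis using lower[of b] upper[of b] by simp
qed

lemma Cpos: "0 < C" using C_ge gpos by simp

lemma lip: "\<bar>\<phi> x - \<phi> y\<bar> \<le> C * norm (x - y)"
  using abs_diff[of x y] upper[of "x - y"] by simp

lemma cont: "continuous_on S \<phi>"
proof -
  have "C-lipschitz_on S \<phi>" unfolding lipschitz_on_def using Cpos lip
    by (auto simp: dist_norm dist_real_def)
  thus ?thesis using lipschitz_on_continuous_on by blast
qed

lemma s3: "(\<phi> p - \<phi> q)\<^sup>2 \<ge> \<gamma>\<^sup>2 * (norm p - norm q)\<^sup>2 / 2 - 2 * C\<^sup>2 * (norm p * norm q - p \<bullet> q)"
proof -
  have main: "(\<phi> p - \<phi> q)\<^sup>2 \<ge> \<gamma>\<^sup>2 * (norm p - norm q)\<^sup>2 / 2 - 2 * C\<^sup>2 * (norm p * norm q - p \<bullet> q)"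
    if le: "norm q \<le> norm p" for p q :: 'a
  proof (cases "p = 0")
    case True thus ?thesis using le by simp
  next
    case False
    hence np: "norm p > 0" by simp
    define c where "c = norm q / norm p"
    have c0: "0 \<le> c" "c \<le> 1" using le np by (auto simp: c_def)
    define p' where "p' = c *\<^sub>R p"
    have P0: "0 \<le> norm p * norm q - p \<bullet> q" using norm_cauchy_schwarz[of p q] by simp
    have X: "\<phi> p - \<phi> p' \<ge> \<gamma> * (norm p - norm q)"
    proof -
      have "\<phi> p - \<phi> p' = (1 - c) * \<phi> p" using c0 by (simp add: p'_def scale_pos algebra_simps)
      also have "\<dots> \<ge> (1 - c) * (\<gamma> * norm p)" using c0 lower[of p] by (intro mult_left_mono) auto
      finally show ?thesis using np by (simp add: c_def algebra_simps)
    qed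
    have "(norm (p' - q))\<^sup>2 = (p' - q) \<bullet> (p' - q)" by (simp add: power2_norm_eq_inner)
    also have "\<dots> = c\<^sup>2 * (p \<bullet> p) - 2 * c * (p \<bullet> q) + q \<bullet> q"
      by (simp add: p'_def inner_diff_left inner_diff_right inner_commute power2_eq_square algebra_simps)
    also have "\<dots> = c\<^sup>2 * (norm p)\<^sup>2 - 2 * c * (p \<bullet> q) + (norm q)\<^sup>2"
      by (simp add: power2_norm_eq_inner)
    also have "\<dots> = 2 * c * (norm p * norm q - p \<bullet> q)" using np by (simp add: c_def power2_eq_square field_simps)
    also have "\<dots> \<le> 2 * (norm p * norm q - p \<bullet> q)" 
    proof -
      have "c * (norm p * norm q - p \<bullet> q) \<le> 1 * (norm p * norm q - p \<bullet> q)"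
        using c0 P0 by (intro mult_right_mono) auto
      thus ?thesis by simp
    qed
    finally have pq: "(norm (p' - q))\<^sup>2 \<le> 2 * (norm p * norm q - p \<bullet> q)" .
    have Y: "(\<phi> p' - \<phi> q)\<^sup>2 \<le> C\<^sup>2 * (2 * (norm p * norm q - p \<bullet> q))"
    proof -
      have "\<bar>\<phi> p' - \<phi> q\<bar> \<le> C * norm (p' - q)" by (rule lip)
      hence "(\<phi> p' - \<phi> q)\<^sup>2 \<le> (C * norm (p' - q))\<^sup>2"
        using power_mono[of "\<bar>\<phi> p' - \<phi> q\<bar>" "C * norm (p' - q)" 2] by simp
      also have "\<dots> = C\<^sup>2 * (norm (p' - q))\<^sup>2" by (simp add: power_mult_distrib)
      also have "\<dots> \<le> C\<^sup>2 * (2 * (norm p * norm q - p \<bullet> q))" using pq by (intro mult_left_mono) auto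
      finally show ?thesis .
    qed
    define X0 where "X0 = \<gamma> * (norm p - norm q)"
    define Y0 where "Y0 = \<phi> p' - \<phi> q"
    have X00: "0 \<le> X0" using le gpos by (simp add: X0_def)
    have key: "(\<phi> p - \<phi> q)\<^sup>2 \<ge> X0\<^sup>2 / 2 - Y0\<^sup>2"
    proof (cases "X0 \<ge> \<bar>Y0\<bar>")
      case True
      have "\<phi> p - \<phi> q \<ge> X0 - \<bar>Y0\<bar>" using X by (simp add: X0_def Y0_def)
      moreover have "X0 - \<bar>Y0\<bar> \<ge> 0" using True by simp
      ultimately have "(\<phi> p - \<phi> q)\<^sup>2 \<ge> (X0 - \<bar>Y0\<bar>)\<^sup>2" by (simp add: power_mono)
      moreover have "(X0 - \<bar>Y0\<bar>)\<^sup>2 \<ge> X0\<^sup>2 / 2 - Y0\<^sup>2"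
      proof -
        have "0 \<le> (X0 - 2 * \<bar>Y0\<bar>)\<^sup>2" by simp
        thus ?thesis by (simp add: power2_eq_square algebra_simps)
      qed
      ultimately show ?thesis by linarith
    next
      case False
      hence "X0\<^sup>2 \<le> \<bar>Y0\<bar>\<^sup>2" using X00 by (intro power_mono) auto
      hence "X0\<^sup>2 \<le> Y0\<^sup>2" by simp
      moreover have "0 \<le> (\<phi> p - \<phi> q)\<^sup>2" "0 \<le> X0\<^sup>2" by simp_all
      ultimately show ?thesis by linarith
    qed
    have "X0\<^sup>2 = \<gamma>\<^sup>2 * (norm p - norm q)\<^sup>2" by (simp add: X0_def power_mult_distrib)
    thus ?thesis using key Y unfolding Y0_def by linarith
  qed
  show ?thesis
  proof (cases "norm q \<le> norm p")
    case True thus ?thesis using main by blast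
  next
    case False
    hence "norm p \<le> norm q" by simp
    from main[OF this] show ?thesis
      by (simp add: inner_commute power2_commute mult.commute)
  qed
qed

definition "msc = \<gamma>^4 / (8 * C\<^sup>2)"

lemma msc_pos: "0 < msc" using gpos Cpos by (simp add: msc_def)

lemma sconv:
  assumes t0: "0 \<le> t" and t1: "t \<le> 1"
  shows "(\<phi> ((1 - t) *\<^sub>R p + t *\<^sub>R q))\<^sup>2
     \<le> (1 - t) * (\<phi> p)\<^sup>2 + t * (\<phi> q)\<^sup>2 - t * (1 - t) * msc * (norm (p - q))\<^sup>2"
proof -
  define a where "a = \<phi> p"
  define b where "b = \<phi> q"
  define m where "m = (1 - t) *\<^sub>R p + t *\<^sub>R q"
  define A where "A = (1 - t) * a + t * b"
  define N where "N = (1 - t) * norm p + t * norm q"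
  define M where "M = norm m"
  define P where "P = norm p * norm q - p \<bullet> q"
  define D where "D = norm p - norm q"
  define E where "E = (a - b)\<^sup>2"
  have P0: "0 \<le> P" using norm_cauchy_schwarz[of p q] by (simp add: P_def)
  have MN: "M \<le> N" unfolding M_def N_def m_def
    using norm_triangle_ineq[of "(1 - t) *\<^sub>R p" "t *\<^sub>R q"] t0 t1 by simp
  have M0: "0 \<le> M" by (simp add: M_def)
  have s1: "\<phi> m \<le> A - \<gamma> * (N - M)"
    using convI[OF t0 t1, of p q] by (simp add: m_def A_def N_def M_def a_def b_def algebra_simps)
  have AN: "\<gamma> * N \<le> A" using lower[of p] lower[of q] t0 t1 unfolding A_def N_def a_def b_def
    by (smt (verit, best) mult_left_mono distrib_left mult.left_commute)
  have NM2: "N\<^sup>2 - M\<^sup>2 = 2 * t * (1 - t) * P"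
  proof -
    have "M\<^sup>2 = m \<bullet> m" by (simp add: M_def power2_norm_eq_inner)
    also have "\<dots> = (1-t)\<^sup>2 * (p \<bullet> p) + 2 * t * (1 - t) * (p \<bullet> q) + t\<^sup>2 * (q \<bullet> q)"
      by (simp add: m_def inner_add_left inner_add_right inner_commute power2_eq_square algebra_simps)
    also have "\<dots> = (1-t)\<^sup>2 * (norm p)\<^sup>2 + 2 * t * (1 - t) * (p \<bullet> q) + t\<^sup>2 * (norm q)\<^sup>2"
      by (simp add: power2_norm_eq_inner)
    finally show ?thesis by (simp add: N_def P_def power2_eq_square algebra_simps)
  qed
  have s2: "t * (1 - t) * P \<le> (N - M) * N"
  proof -
    have "(N - M) * (N + M) \<le> (N - M) * (2 * N)" using MN by (intro mult_left_mono) auto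
    moreover have "(N - M) * (N + M) = N\<^sup>2 - M\<^sup>2" by (simp add: power2_eq_square algebra_simps)
    ultimately show ?thesis using NM2 by simp
  qed
  have Am: "0 \<le> A - \<gamma> * (N - M)" using s1 nonneg[of m] by linarith
  have "(\<phi> m)\<^sup>2 \<le> (A - \<gamma> * (N - M))\<^sup>2" using s1 nonneg[of m] by (intro power_mono) auto
  also have "\<dots> = A\<^sup>2 - \<gamma> * (N - M) * A - \<gamma> * (N - M) * (A - \<gamma> * (N - M))"
    by (simp add: power2_eq_square algebra_simps)
  also have "\<dots> \<le> A\<^sup>2 - \<gamma> * (N - M) * A"
    using Am MN gpos by simp
  also have "\<dots> \<le> A\<^sup>2 - \<gamma> * (N - M) * (\<gamma> * N)"
    using AN MN gpos by (simp add: mult_left_mono)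
  also have "\<dots> \<le> A\<^sup>2 - \<gamma>\<^sup>2 * (t * (1 - t) * P)"
  proof -
    have "\<gamma>\<^sup>2 * (t * (1 - t) * P) \<le> \<gamma>\<^sup>2 * ((N - M) * N)" using s2 by (intro mult_left_mono) auto
    thus ?thesis by (simp add: power2_eq_square algebra_simps)
  qed
  also have "A\<^sup>2 = (1 - t) * a\<^sup>2 + t * b\<^sup>2 - t * (1 - t) * E"
    by (simp add: A_def E_def power2_eq_square algebra_simps)
  finally have st: "(\<phi> m)\<^sup>2 \<le> (1 - t) * a\<^sup>2 + t * b\<^sup>2 - t * (1 - t) * (E + \<gamma>\<^sup>2 * P)"
    by (simp add: algebra_simps)
  define e where "e = \<gamma>\<^sup>2 / (4 * C\<^sup>2)"
  have e0: "0 \<le> e" by (simp add: e_def)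
  have e1: "e \<le> 1/4"
  proof -
    have "\<gamma>\<^sup>2 \<le> C\<^sup>2" using C_ge gpos by (intro power_mono) auto
    thus ?thesis using Cpos by (simp add: e_def field_simps)
  qed
  have E3: "E \<ge> \<gamma>\<^sup>2 * D\<^sup>2 / 2 - 2 * C\<^sup>2 * P" using s3[of p q] by (simp add: E_def D_def P_def a_def b_def)
  have E0: "0 \<le> E" by (simp add: E_def)
  have h1: "e * E \<le> E"
  proof -
    have "e * E \<le> 1 * E" using e1 E0 by (intro mult_right_mono) auto
    thus ?thesis by simp
  qed
  have h2: "e * E \<ge> e * (\<gamma>\<^sup>2 * D\<^sup>2 / 2 - 2 * C\<^sup>2 * P)" using E3 e0 by (intro mult_left_mono)
  have h2b: "e * (\<gamma>\<^sup>2 * D\<^sup>2 / 2 - 2 * C\<^sup>2 * P) = e * \<gamma>\<^sup>2 * D\<^sup>2 / 2 - e * (2 * C\<^sup>2 * P)"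
    by (simp add: algebra_simps)
  have h3: "e * (2 * C\<^sup>2 * P) = \<gamma>\<^sup>2 * P / 2" using Cpos by (simp add: e_def field_simps)
  have h4: "msc = e * \<gamma>\<^sup>2 / 2" using Cpos by (simp add: msc_def e_def field_simps power2_eq_square power4_eq_xxxx)
  have h5: "e * (\<gamma>\<^sup>2 * P) \<le> \<gamma>\<^sup>2 * P / 2"
  proof -
    have "e * (\<gamma>\<^sup>2 * P) \<le> (1/2) * (\<gamma>\<^sup>2 * P)" using e1 P0 by (intro mult_right_mono) auto
    thus ?thesis by simp
  qed
  have h6: "(norm (p - q))\<^sup>2 = D\<^sup>2 + 2 * P"
  proof -
    have "(norm (p - q))\<^sup>2 = (p - q) \<bullet> (p - q)" by (simp add: power2_norm_eq_inner)
    also have "\<dots> = p \<bullet> p - 2 * (p \<bullet> q) + q \<bullet> q" by (simp add: inner_diff_left inner_diff_right inner_commute)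
    also have "\<dots> = (norm p)\<^sup>2 - 2 * (p \<bullet> q) + (norm q)\<^sup>2" by (simp add: power2_norm_eq_inner)
    finally show ?thesis by (simp add: D_def P_def power2_eq_square algebra_simps)
  qed
  have h7: "msc * (norm (p - q))\<^sup>2 = e * \<gamma>\<^sup>2 * D\<^sup>2 / 2 + e * (\<gamma>\<^sup>2 * P)"
    unfolding h4 h6 by (simp add: algebra_simps)
  have "E + \<gamma>\<^sup>2 * P \<ge> msc * (norm (p - q))\<^sup>2"
    unfolding h7 using h1 h2 h2b h3 h5 by linarith
  hence "t * (1 - t) * (E + \<gamma>\<^sup>2 * P) \<ge> t * (1 - t) * (msc * (norm (p - q))\<^sup>2)"
    using t0 t1 by (intro mult_left_mono) auto
  thus ?thesis using st by (simp add: m_def a_def b_def algebra_simps)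
qed

end


locale unorm2 = unorm +
  fixes f' :: "'a \<Rightarrow> 'a \<Rightarrow>\<^sub>L real" and f'' :: "'a \<Rightarrow> 'a \<Rightarrow>\<^sub>L ('a \<Rightarrow>\<^sub>L real)"
  assumes d1: "x \<noteq> 0 \<Longrightarrow> (\<phi> has_derivative blinfun_apply (f' x)) (at x)"
    and d2: "x \<noteq> 0 \<Longrightarrow> (f' has_derivative blinfun_apply (f'' x)) (at x)"
    and c2: "continuous_on (UNIV - {0}) f''"
begin

lemma hom1: assumes t: "0 < t" and x: "x \<noteq> 0" shows "f' (t *\<^sub>R x) = f' x"
proof -
  have tx: "t *\<^sub>R x \<noteq> 0" using t x by simp
  have A: "((\<lambda>v. \<phi> (t *\<^sub>R v)) has_derivative (\<lambda>v. blinfun_apply (f' (t *\<^sub>R x)) (t *\<^sub>R v))) (at x)"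
    by (rule has_derivative_compose[OF has_derivative_scaleR_right[OF has_derivative_ident] d1[OF tx]])
  have e: "(\<lambda>v. \<phi> (t *\<^sub>R v)) = (\<lambda>v. t *\<^sub>R \<phi> v)" using t by (auto simp: scale_pos)
  have B: "((\<lambda>v. t *\<^sub>R \<phi> v) has_derivative (\<lambda>v. t *\<^sub>R blinfun_apply (f' x) v)) (at x)"
    by (rule has_derivative_scaleR_right[OF d1[OF x]])
  have "(\<lambda>v. blinfun_apply (f' (t *\<^sub>R x)) (t *\<^sub>R v)) = (\<lambda>v. t *\<^sub>R blinfun_apply (f' x) v)"
    using has_derivative_unique[OF A[unfolded e] B] .
  hence "\<And>v. t * blinfun_apply (f' (t *\<^sub>R x)) v = t * blinfun_apply (f' x) v"
    by (metis blinfun.scaleR_right real_scaleR_def)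
  thus ?thesis using t by (intro blinfun_eqI) simp
qed

lemma hom2: assumes t: "0 < t" and x: "x \<noteq> 0" shows "f'' (t *\<^sub>R x) = (1 / t) *\<^sub>R f'' x"
proof -
  have tx: "t *\<^sub>R x \<noteq> 0" using t x by simp
  have A: "((\<lambda>v. f' (t *\<^sub>R v)) has_derivative (\<lambda>v. blinfun_apply (f'' (t *\<^sub>R x)) (t *\<^sub>R v))) (at x)"
    by (rule has_derivative_compose[OF has_derivative_scaleR_right[OF has_derivative_ident] d2[OF tx]])
  have A': "(f' has_derivative (\<lambda>v. blinfun_apply (f'' (t *\<^sub>R x)) (t *\<^sub>R v))) (at x)"
    by (rule has_derivative_transform_within_open[OF A, of "UNIV - {0}"]) (use x t hom1 in auto)
  have "(\<lambda>v. blinfun_apply (f'' (t *\<^sub>R x)) (t *\<^sub>R v)) = blinfun_apply (f'' x)"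
    using has_derivative_unique[OF A' d2[OF x]] .
  hence tv: "\<And>v. t *\<^sub>R blinfun_apply (f'' (t *\<^sub>R x)) v = blinfun_apply (f'' x) v"
    by (metis blinfun.scaleR_right)
  have "\<And>v. blinfun_apply (f'' (t *\<^sub>R x)) v = (1/t) *\<^sub>R blinfun_apply (f'' x) v"
  proof -
    fix v
    have "blinfun_apply (f'' (t *\<^sub>R x)) v = (1/t) *\<^sub>R (t *\<^sub>R blinfun_apply (f'' (t *\<^sub>R x)) v)"
      using t by simp
    also have "\<dots> = (1/t) *\<^sub>R blinfun_apply (f'' x) v" using tv[of v] by simp
    finally show "blinfun_apply (f'' (t *\<^sub>R x)) v = (1/t) *\<^sub>R blinfun_apply (f'' x) v" .
  qed
  thus ?thesis by (intro blinfun_eqI) (simp add: scaleR_blinfun.rep_eq)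
qed

lemma cont_f': "continuous_on (UNIV - {0}) f'"
proof -
  have "\<forall>x\<in>UNIV - {0}. isCont f' x" using d2 has_derivative_continuous by blast
  thus ?thesis by (rule continuous_at_imp_continuous_on)
qed

lemma bound_sphere:
  assumes "continuous_on (UNIV - {0}) (g :: 'a \<Rightarrow> 'b::real_normed_vector)"
  shows "\<exists>B\<ge>0. \<forall>x\<in>sphere 0 1. norm (g x) \<le> B"
proof -
  have "continuous_on (sphere 0 1) g" using assms by (rule continuous_on_subset) auto
  hence "compact (g ` sphere 0 1)" by (intro compact_continuous_image) auto
  then obtain B where "\<forall>y\<in>g ` sphere 0 1. norm y \<le> B" using compact_imp_bounded bounded_iff by metis
  hence "\<forall>x\<in>sphere 0 1. norm (g x) \<le> max B 0" by auto
  thus ?thesis by (intro exI[of _ "max B 0"]) auto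
qed

definition "B1 = (SOME B. B \<ge> 0 \<and> (\<forall>x\<in>sphere 0 1. norm (f' x) \<le> B))"
definition "M2 = (SOME B. B \<ge> 0 \<and> (\<forall>x\<in>sphere 0 1. norm (f'' x) \<le> B))"

lemma B1: "B1 \<ge> 0" "x \<in> sphere 0 1 \<Longrightarrow> norm (f' x) \<le> B1"
  using someI_ex[OF bound_sphere[OF cont_f']] unfolding B1_def by auto
lemma M2: "M2 \<ge> 0" "x \<in> sphere 0 1 \<Longrightarrow> norm (f'' x) \<le> M2"
  using someI_ex[OF bound_sphere[OF c2]] unfolding M2_def by auto

lemma f'_bound: "x \<noteq> 0 \<Longrightarrow> norm (f' x) \<le> B1"
proof -
  assume x: "x \<noteq> 0"
  have "f' x = f' (norm x *\<^sub>R ((1 / norm x) *\<^sub>R x))" using x by simp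
  also have "\<dots> = f' ((1 / norm x) *\<^sub>R x)" using x by (intro hom1) auto
  finally show ?thesis using B1(2)[of "(1 / norm x) *\<^sub>R x"] x by simp
qed

lemma f''_bound: "x \<noteq> 0 \<Longrightarrow> norm (f'' x) \<le> M2 / norm x"
proof -
  assume x: "x \<noteq> 0"
  have "f'' x = f'' (norm x *\<^sub>R ((1 / norm x) *\<^sub>R x))" using x by simp
  also have "\<dots> = (1 / norm x) *\<^sub>R f'' ((1 / norm x) *\<^sub>R x)" using x by (intro hom2) auto
  finally have "norm (f'' x) = (1 / norm x) * norm (f'' ((1 / norm x) *\<^sub>R x))" by simp
  also have "\<dots> \<le> (1 / norm x) * M2" using M2(2)[of "(1 / norm x) *\<^sub>R x"] x
    by (intro mult_left_mono) auto
  finally show ?thesis by simp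
qed

lemma f'_near:
  assumes q: "q \<noteq> 0" and pq: "norm (p - q) \<le> norm q / 2"
  shows "norm (f' p - f' q) \<le> (2 * M2 / norm q) * norm (p - q)"
proof -
  have nq: "0 < norm q" using q by simp
  have xS: "norm x \<ge> norm q / 2" if "x \<in> closed_segment q p" for x
  proof -
    have "norm (x - q) \<le> norm (p - q)" using segment_bound1[OF that] .
    moreover have "norm q \<le> norm x + norm (x - q)" using norm_triangle_sub[of q x] norm_minus_commute[of x q]
      by simp
    ultimately show ?thesis using pq by linarith
  qed
  show ?thesis
  proof (rule differentiable_bound[of "closed_segment q p" f' "\<lambda>x. blinfun_apply (f'' x)"])
    show "convex (closed_segment q p)" by simp
    show "(f' has_derivative blinfun_apply (f'' x)) (at x within closed_segment q p)"
      if "x \<in> closed_segment q p" for x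
      using xS[OF that] nq by (intro has_derivative_at_withinI[OF d2]) auto
    show "onorm (blinfun_apply (f'' x)) \<le> 2 * M2 / norm q" if "x \<in> closed_segment q p" for x
    proof -
      have x0: "x \<noteq> 0" using xS[OF that] nq by auto
      have "onorm (blinfun_apply (f'' x)) = norm (f'' x)" by (simp add: norm_blinfun.rep_eq)
      also have "\<dots> \<le> M2 / norm x" using f''_bound[OF x0] .
      also have "\<dots> \<le> M2 / (norm q / 2)" using xS[OF that] nq M2(1) by (intro divide_left_mono) (auto simp: x0)
      finally show ?thesis by (simp add: mult.commute)
    qed
  qed auto
qed

definition "K1 = 2 * M2 + 4 * B1"

lemma f'_diff:
  assumes q: "q \<noteq> 0" and le: "norm q \<le> norm p"
  shows "norm (f' p - f' q) \<le> K1 * norm (p - q) / norm q"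
proof -
  have nq: "0 < norm q" using q by simp
  have p: "p \<noteq> 0" using le nq by auto
  show ?thesis
  proof (cases "norm (p - q) \<le> norm q / 2")
    case True
    have "norm (f' p - f' q) \<le> (2 * M2 / norm q) * norm (p - q)" using f'_near[OF q True] .
    also have "\<dots> = (2 * M2 * norm (p - q)) / norm q" by simp
    also have "\<dots> \<le> K1 * norm (p - q) / norm q"
    proof (intro divide_right_mono mult_right_mono)
      show "2 * M2 \<le> K1" using B1(1) by (simp add: K1_def)
    qed auto
    finally show ?thesis .
  next
    case False
    have "norm (f' p - f' q) \<le> norm (f' p) + norm (f' q)" by (rule norm_triangle_ineq4)
    also have "\<dots> \<le> 2 * B1" using f'_bound[OF p] f'_bound[OF q] by simp
    also have "\<dots> \<le> 4 * B1 * norm (p - q) / norm q"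
    proof -
      have "(2 * B1) * norm q \<le> (2 * B1) * (2 * norm (p - q))" using False B1(1)
        by (intro mult_left_mono) auto
      hence "2 * B1 * norm q \<le> 4 * B1 * norm (p - q)" by simp
      thus ?thesis using nq by (simp add: field_simps)
    qed
    also have "\<dots> \<le> K1 * norm (p - q) / norm q" using M2(1) nq
      by (intro divide_right_mono mult_right_mono) (auto simp: K1_def)
    finally show ?thesis .
  qed
qed

definition "Gd x = (2 * \<phi> x) *\<^sub>R f' x"
definition "LG = 2 * (C * B1 + C * K1)"

lemma Gd0: "Gd 0 = 0" by (simp add: Gd_def)

lemma Gd_norm: "norm (Gd p) \<le> 2 * C * B1 * norm p"
proof (cases "p = 0")
  case True thus ?thesis by (simp add: Gd0)
next
  case False
  have "norm (Gd p) = 2 * \<phi> p * norm (f' p)" using nonneg[of p] by (simp add: Gd_def)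
  also have "\<dots> \<le> 2 * (C * norm p) * B1"
    using upper[of p] f'_bound[OF False] nonneg[of p] B1(1)
    by (intro mult_mono) auto
  finally show ?thesis by (simp add: mult_ac)
qed

lemma Gd_lip_aux:
  assumes le: "norm q \<le> norm p"
  shows "norm (Gd p - Gd q) \<le> LG * norm (p - q)"
proof (cases "q = 0")
  case True
  have "2 * C * B1 * norm p \<le> LG * norm p"
  proof (intro mult_right_mono)
    show "2 * C * B1 \<le> LG" using Cpos M2(1) B1(1) unfolding LG_def K1_def by simp
  qed simp
  thus ?thesis using Gd_norm[of p] True by (simp add: Gd0)
next
  case False
  have nq: "0 < norm q" using False by simp
  have p: "p \<noteq> 0" using le nq by auto
  have e: "Gd p - Gd q = (2 * (\<phi> p - \<phi> q)) *\<^sub>R f' p + (2 * \<phi> q) *\<^sub>R (f' p - f' q)"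
    by (simp add: Gd_def algebra_simps)
  have "norm (Gd p - Gd q) \<le> norm ((2 * (\<phi> p - \<phi> q)) *\<^sub>R f' p) + norm ((2 * \<phi> q) *\<^sub>R (f' p - f' q))"
    unfolding e by (rule norm_triangle_ineq)
  also have "\<dots> = 2 * \<bar>\<phi> p - \<phi> q\<bar> * norm (f' p) + 2 * \<phi> q * norm (f' p - f' q)"
  proof -
    show ?thesis by (simp only: norm_scaleR abs_mult abs_numeral abs_of_nonneg[OF nonneg[of q]])
  qed
  also have "\<dots> \<le> 2 * (C * norm (p - q)) * B1 + 2 * (C * norm q) * (K1 * norm (p - q) / norm q)"
    using lip[of p q] f'_bound[OF p] upper[of q] f'_diff[OF False le] nonneg[of q] B1(1) Cpos
    by (intro add_mono mult_mono) auto
  also have "\<dots> = LG * norm (p - q)" using nq by (simp add: LG_def field_simps)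
  finally show ?thesis .
qed

lemma Gd_lip: "norm (Gd p - Gd q) \<le> LG * norm (p - q)"
proof (cases "norm q \<le> norm p")
  case True thus ?thesis by (rule Gd_lip_aux)
next
  case False
  hence "norm (Gd q - Gd p) \<le> LG * norm (q - p)" by (intro Gd_lip_aux) auto
  thus ?thesis by (simp add: norm_minus_commute)
qed

lemma LG0: "0 \<le> LG" using Cpos B1(1) M2(1) by (simp add: LG_def K1_def)

lemma G_deriv: "((\<lambda>x. (\<phi> x)\<^sup>2) has_derivative blinfun_apply (Gd x)) (at x)"
proof (cases "x = 0")
  case False
  have "((\<lambda>x. \<phi> x * \<phi> x) has_derivative
      (\<lambda>h. \<phi> x * blinfun_apply (f' x) h + blinfun_apply (f' x) h * \<phi> x)) (at x)"
    by (rule has_derivative_mult[OF d1[OF False] d1[OF False]])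
  moreover have "(\<lambda>h. \<phi> x * blinfun_apply (f' x) h + blinfun_apply (f' x) h * \<phi> x) = blinfun_apply (Gd x)"
    by (rule ext) (simp add: Gd_def scaleR_blinfun.rep_eq)
  ultimately show ?thesis by (simp add: power2_eq_square)
next
  case True
  have bl: "blinfun_apply (Gd x) = (\<lambda>h. 0)" using True by (auto simp: Gd0)
  have "((\<lambda>h. norm ((\<phi> (0 + h))\<^sup>2 - (\<phi> 0)\<^sup>2 - 0) / norm h) \<longlongrightarrow> 0) (at 0)"
  proof (rule Lim_null_comparison)
    show "\<forall>\<^sub>F h in at 0. norm (norm ((\<phi> (0 + h))\<^sup>2 - (\<phi> 0)\<^sup>2 - 0) / norm h) \<le> C\<^sup>2 * norm h"
    proof (intro always_eventually allI)
      fix h :: 'a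
      show "norm (norm ((\<phi> (0 + h))\<^sup>2 - (\<phi> 0)\<^sup>2 - 0) / norm h) \<le> C\<^sup>2 * norm h"
      proof (cases "h = 0")
        case False
        have "(\<phi> h)\<^sup>2 \<le> (C * norm h)\<^sup>2" using upper[of h] nonneg[of h] by (intro power_mono) auto
        hence "(\<phi> h)\<^sup>2 / norm h \<le> (C * norm h)\<^sup>2 / norm h" by (intro divide_right_mono) auto
        also have "\<dots> = C\<^sup>2 * norm h" using False by (simp add: power2_eq_square)
        finally show ?thesis by simp
      qed simp
    qed
    have "((\<lambda>h. norm h) \<longlongrightarrow> 0) (at (0::'a))" by (intro tendsto_norm_zero tendsto_ident_at)
    thus "((\<lambda>h. C\<^sup>2 * norm h) \<longlongrightarrow> 0) (at (0::'a))" by (intro tendsto_mult_right_zero)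
  qed
  hence "((\<lambda>x. (\<phi> x)\<^sup>2) has_derivative (\<lambda>h. 0)) (at 0)"
    unfolding has_derivative_at by simp
  thus ?thesis using True bl by simp
qed

lemma mixed: "(\<phi> (z + y))\<^sup>2 - (\<phi> z)\<^sup>2 \<le> (\<phi> (z + y - h))\<^sup>2 - (\<phi> (z - h))\<^sup>2 + LG * norm y * norm h"
proof -
  define g where "g v = (\<phi> (z + y - v))\<^sup>2 - (\<phi> (z - v))\<^sup>2" for v
  have "norm (g h - g 0) \<le> (LG * norm y) * norm (h - 0)"
  proof (rule differentiable_bound[of UNIV g "\<lambda>v. blinfun_apply (Gd (z - v) - Gd (z + y - v))"])
    fix v :: 'a
    have A: "((\<lambda>v. (\<phi> (z + y - v))\<^sup>2) has_derivative (\<lambda>d. blinfun_apply (Gd (z + y - v)) (0 - d))) (at v)"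
      by (rule has_derivative_compose[OF has_derivative_diff[OF has_derivative_const has_derivative_ident] G_deriv])
    have B: "((\<lambda>v. (\<phi> (z - v))\<^sup>2) has_derivative (\<lambda>d. blinfun_apply (Gd (z - v)) (0 - d))) (at v)"
      by (rule has_derivative_compose[OF has_derivative_diff[OF has_derivative_const has_derivative_ident] G_deriv])
    have "(g has_derivative (\<lambda>d. blinfun_apply (Gd (z + y - v)) (0 - d) - blinfun_apply (Gd (z - v)) (0 - d))) (at v)"
      unfolding g_def by (rule has_derivative_diff[OF A B])
    moreover have "(\<lambda>d. blinfun_apply (Gd (z + y - v)) (0 - d) - blinfun_apply (Gd (z - v)) (0 - d))
        = blinfun_apply (Gd (z - v) - Gd (z + y - v))"
      by (rule ext) (simp add: blinfun.minus_right blinfun.diff_left)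
    ultimately show "(g has_derivative blinfun_apply (Gd (z - v) - Gd (z + y - v))) (at v within UNIV)" by simp
    have "onorm (blinfun_apply (Gd (z - v) - Gd (z + y - v))) = norm (Gd (z - v) - Gd (z + y - v))"
      by (simp add: norm_blinfun.rep_eq)
    also have "\<dots> \<le> LG * norm ((z - v) - (z + y - v))" by (rule Gd_lip)
    finally show "onorm (blinfun_apply (Gd (z - v) - Gd (z + y - v))) \<le> LG * norm y" by simp
  qed auto
  thus ?thesis unfolding g_def by (simp add: abs_le_iff)
qed

lemma key:
  assumes mu: "1 < \<mu>" and i: "\<mu> * \<phi> u \<le> \<phi> (Y - \<mu> *\<^sub>R u)" and ii: "\<phi> (B - Y) \<le> \<phi> B"
  shows "norm Y \<le> LG / (msc * (1 - 1/\<mu>)) * norm (B - u)"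
proof -
  define z where "z = - u"
  define h where "h = B - u"
  define \<theta> where "\<theta> = 1 / \<mu>"
  have th: "0 < \<theta>" "\<theta> < 1" using mu by (auto simp: \<theta>_def)
  have "(1/\<mu>) *\<^sub>R Y - u = (1/\<mu>) *\<^sub>R (Y - \<mu> *\<^sub>R u)" using mu by (simp add: algebra_simps)
  hence "\<phi> (z + \<theta> *\<^sub>R Y) = (1/\<mu>) * \<phi> (Y - \<mu> *\<^sub>R u)" using mu
    by (simp add: z_def \<theta>_def scale_pos)
  also have "\<dots> \<ge> (1/\<mu>) * (\<mu> * \<phi> u)" using i mu by (intro mult_left_mono) auto
  finally have "\<phi> z \<le> \<phi> (z + \<theta> *\<^sub>R Y)" using mu by (simp add: z_def)
  hence g1: "(\<phi> z)\<^sup>2 \<le> (\<phi> (z + \<theta> *\<^sub>R Y))\<^sup>2" using nonneg by (intro power_mono) auto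
  have "\<phi> (z + Y - h) \<le> \<phi> (z - h)"
  proof -
    have e1: "z + Y - h = - (B - Y)" and e2: "z - h = - B" by (simp_all add: z_def h_def)
    show ?thesis unfolding e1 e2 neg using ii .
  qed
  hence g2: "(\<phi> (z + Y - h))\<^sup>2 \<le> (\<phi> (z - h))\<^sup>2" using nonneg by (intro power_mono) auto
  have g3: "(\<phi> (z + Y))\<^sup>2 - (\<phi> z)\<^sup>2 \<le> LG * norm Y * norm h" using mixed[of z Y h] g2 by linarith
  have "(\<phi> ((1 - \<theta>) *\<^sub>R z + \<theta> *\<^sub>R (z + Y)))\<^sup>2
     \<le> (1 - \<theta>) * (\<phi> z)\<^sup>2 + \<theta> * (\<phi> (z + Y))\<^sup>2 - \<theta> * (1 - \<theta>) * msc * (norm (z - (z + Y)))\<^sup>2"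
    using th by (intro sconv) auto
  moreover have "(1 - \<theta>) *\<^sub>R z + \<theta> *\<^sub>R (z + Y) = z + \<theta> *\<^sub>R Y" by (simp add: algebra_simps)
  ultimately have "(\<phi> z)\<^sup>2 \<le> (1 - \<theta>) * (\<phi> z)\<^sup>2 + \<theta> * (\<phi> (z + Y))\<^sup>2 - \<theta> * (1 - \<theta>) * msc * (norm Y)\<^sup>2"
    using g1 by simp
  hence "\<theta> * ((1 - \<theta>) * msc * (norm Y)\<^sup>2) \<le> \<theta> * ((\<phi> (z + Y))\<^sup>2 - (\<phi> z)\<^sup>2)"
    by (simp add: algebra_simps)
  hence "(1 - \<theta>) * msc * (norm Y)\<^sup>2 \<le> (\<phi> (z + Y))\<^sup>2 - (\<phi> z)\<^sup>2" using th by simp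
  hence st: "(1 - \<theta>) * msc * (norm Y)\<^sup>2 \<le> LG * norm Y * norm h" using g3 by linarith
  show ?thesis
  proof (cases "Y = 0")
    case True thus ?thesis using LG0 msc_pos th by (simp add: \<theta>_def)
  next
    case False
    hence nY: "0 < norm Y" by simp
    have "((1 - \<theta>) * msc * norm Y) * norm Y \<le> (LG * norm h) * norm Y" using st
      by (simp add: power2_eq_square mult_ac)
    hence "(1 - \<theta>) * msc * norm Y \<le> LG * norm h" using nY by simp
    hence "norm Y \<le> LG * norm h / ((1 - \<theta>) * msc)" using th msc_pos
      by (simp add: field_simps)
    thus ?thesis by (simp add: h_def \<theta>_def mult_ac)
  qed
qed

end


context unorm begin

lemma dist_lower: "k \<in> K \<Longrightarrow> dist_fn \<phi> K x \<le> \<phi> (k - x)"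
  unfolding dist_fn_def by (rule cInf_lower) (auto intro!: bdd_belowI[of _ 0] nonneg)

lemma dist_greatest: "K \<noteq> {} \<Longrightarrow> (\<And>k. k \<in> K \<Longrightarrow> c \<le> \<phi> (k - x)) \<Longrightarrow> c \<le> dist_fn \<phi> K x"
  unfolding dist_fn_def by (rule cInf_greatest) auto

lemma nearest_exists:
  assumes K: "closed K" "K \<noteq> {}"
  shows "\<exists>w. w \<in> nearest \<phi> K x"
proof -
  obtain k0 where k0: "k0 \<in> K" using K by auto
  define R where "R = \<phi> (k0 - x) / \<gamma>"
  define S where "S = K \<inter> cball x R"
  have k0S: "k0 \<in> S"
  proof -
    have "\<gamma> * norm (k0 - x) \<le> \<phi> (k0 - x)" by (rule lower)
    hence "norm (k0 - x) \<le> R" using gpos by (simp add: R_def field_simps)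
    thus ?thesis using k0 by (simp add: S_def dist_norm norm_minus_commute)
  qed
  have "compact S" unfolding S_def using K by (intro closed_Int_compact) auto
  moreover have "continuous_on S (\<lambda>k. \<phi> (k - x))"
    by (rule continuous_on_compose2[OF cont[of UNIV]]) (auto intro!: continuous_intros)
  ultimately obtain w where wS: "w \<in> S" and wmin: "\<forall>k\<in>S. \<phi> (w - x) \<le> \<phi> (k - x)"
    using continuous_attains_inf[of S "\<lambda>k. \<phi> (k - x)"] k0S by blast
  have all: "\<phi> (w - x) \<le> \<phi> (k - x)" if k: "k \<in> K" for k
  proof (cases "k \<in> S")
    case True thus ?thesis using wmin by blast
  next
    case False
    hence "norm (k - x) > R" using k by (simp add: S_def dist_norm norm_minus_commute)
    hence "\<gamma> * R < \<gamma> * norm (k - x)" using gpos by simp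
    also have "\<dots> \<le> \<phi> (k - x)" by (rule lower)
    finally have "\<phi> (k0 - x) < \<phi> (k - x)" using gpos by (simp add: R_def)
    thus ?thesis using wmin k0S by fastforce
  qed
  have wK: "w \<in> K" using wS by (simp add: S_def)
  have "dist_fn \<phi> K x = \<phi> (w - x)"
    using dist_lower[OF wK, of x] dist_greatest[OF K(2), of "\<phi> (w - x)" x] all by fastforce
  hence "w \<in> nearest \<phi> K x" using wK by (simp add: nearest_def commute)
  thus ?thesis by blast
qed

lemma ball_prop:
  assumes K: "closed K" "K \<noteq> {}" and a: "a \<in> K_lst \<phi> K lam s t"
    and mu: "1 < \<mu>" "\<mu> < lam" and s: "0 < s"
    and w: "w = (SOME w. w \<in> nearest \<phi> K a)"
  shows "w \<in> nearest \<phi> K a" "k \<in> K \<Longrightarrow> \<mu> * \<phi> (a - w) \<le> \<phi> ((k - w) - \<mu> *\<^sub>R (a - w))"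
proof -
  show wn: "w \<in> nearest \<phi> K a" unfolding w using nearest_exists[OF K, of a] by (rule someI_ex)
  hence wK: "w \<in> K" and r: "\<phi> (a - w) = dist_fn \<phi> K a" by (auto simp: nearest_def)
  define S' where "S' = {s'::real. dist_fn \<phi> K (w + s' *\<^sub>R (a - w)) = s' * dist_fn \<phi> K a}"
  have "ereal lam \<le> Sup (ereal ` S')" using a unfolding K_lst_def reach_fn_def Let_def S'_def w by simp
  then obtain s' where s'S: "s' \<in> S'" and s'mu: "\<mu> < s'"
  proof -
    assume h: "\<And>s'. s' \<in> S' \<Longrightarrow> \<mu> < s' \<Longrightarrow> thesis"
    show thesis
    proof (rule ccontr)
      assume "\<not> thesis"
      hence "\<forall>s'\<in>S'. s' \<le> \<mu>" using h by force
      hence "Sup (ereal ` S') \<le> ereal \<mu>" by (auto intro!: Sup_least)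
      hence "ereal lam \<le> ereal \<mu>" using \<open>ereal lam \<le> Sup (ereal ` S')\<close> by (rule order_trans[rotated])
      thus False using mu by simp
    qed
  qed
  assume k: "k \<in> K"
  have "s' * \<phi> (a - w) = dist_fn \<phi> K (w + s' *\<^sub>R (a - w))" using s'S r by (simp add: S'_def)
  also have "\<dots> \<le> \<phi> (k - (w + s' *\<^sub>R (a - w)))" by (rule dist_lower[OF k])
  also have "k - (w + s' *\<^sub>R (a - w)) = ((k - w) - \<mu> *\<^sub>R (a - w)) + (- ((s' - \<mu>) *\<^sub>R (a - w)))"
    by (simp add: algebra_simps)
  also have "\<phi> \<dots> \<le> \<phi> ((k - w) - \<mu> *\<^sub>R (a - w)) + (s' - \<mu>) * \<phi> (a - w)"
    using tri[of "(k - w) - \<mu> *\<^sub>R (a - w)" "- ((s' - \<mu>) *\<^sub>R (a - w))"] s'mu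
    by (simp add: scale_pos)
  finally show "\<mu> * \<phi> (a - w) \<le> \<phi> ((k - w) - \<mu> *\<^sub>R (a - w))" by (simp add: algebra_simps)
qed

end

context unorm2 begin

lemma part1:
  assumes K: "closed K" and a: "a \<in> K_lst \<phi> K lam s t"
    and mu: "1 < \<mu>" "\<mu> < lam" and s: "0 < s"
    and y: "y \<in> nearest \<phi> K b"
  shows "nearest \<phi> K a = {SOME w. w \<in> nearest \<phi> K a}"
    "norm (y - (SOME w. w \<in> nearest \<phi> K a)) \<le> LG / (msc * (1 - 1/\<mu>)) * norm (b - a)"
proof -
  define w where "w = (SOME w. w \<in> nearest \<phi> K a)"
  have Kne: "K \<noteq> {}" using y by (auto simp: nearest_def)
  note bp = ball_prop[OF K Kne a mu s w_def]
  have gen: "norm (y' - w) \<le> LG / (msc * (1 - 1/\<mu>)) * norm (b' - a)" if y': "y' \<in> nearest \<phi> K b'" for y' b'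
  proof -
    have y'K: "y' \<in> K" and dy: "\<phi> (b' - y') = dist_fn \<phi> K b'" using y' by (auto simp: nearest_def)
    have i: "\<mu> * \<phi> (a - w) \<le> \<phi> ((y' - w) - \<mu> *\<^sub>R (a - w))" using bp(2)[OF y'K] .
    have wK: "w \<in> K" using bp(1) by (simp add: nearest_def)
    have ii: "\<phi> ((b' - w) - (y' - w)) \<le> \<phi> (b' - w)"
      using dy dist_lower[OF wK, of b'] commute[of w b'] by simp
    have "norm (y' - w) \<le> LG / (msc * (1 - 1/\<mu>)) * norm ((b' - w) - (a - w))"
      by (rule key[OF mu(1) i ii])
    thus ?thesis by simp
  qed
  show "norm (y - (SOME w. w \<in> nearest \<phi> K a)) \<le> LG / (msc * (1 - 1/\<mu>)) * norm (b - a)"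
    using gen[OF y] by (simp add: w_def)
  have "nearest \<phi> K a = {w}"
  proof
    show "{w} \<subseteq> nearest \<phi> K a" using bp(1) by simp
    show "nearest \<phi> K a \<subseteq> {w}"
    proof
      fix y' assume "y' \<in> nearest \<phi> K a"
      from gen[OF this] show "y' \<in> {w}" by simp
    qed
  qed
  thus "nearest \<phi> K a = {SOME w. w \<in> nearest \<phi> K a}" by (simp add: w_def)
qed

end


theorem corollary3p10:
  fixes \<phi> :: "'a::euclidean_space \<Rightarrow> real" and s t lam :: real
  assumes "uniformly_convex_norm \<phi>"
    and "C2_on (UNIV - {0}) \<phi>"
    and "0 < s" and "s < t"
    and "1 < lam"
  shows "\<exists>\<Gamma>::real. \<forall>K. closed K \<longrightarrow>
           (\<forall>a b y. a \<in> K_lst \<phi> K lam s t \<and> y \<in> nearest \<phi> K b \<and> dist_fn \<phi> K b \<le> t \<longrightarrow>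
              \<phi> (the_elem (nearest \<phi> K a) - y) \<le> \<Gamma> * \<phi> (a - b)) \<and>
           (\<exists>L. L-lipschitz_on (K_lst \<phi> K lam s t) (\<lambda>x. the_elem (nearest \<phi> K x)))"
proof -
  obtain \<gamma> where nf: "is_norm_fun \<phi>" and g: "\<gamma> > 0" and cv: "convex_on UNIV (\<lambda>x. \<phi> x - \<gamma> * norm x)"
    using assms(1) unfolding uniformly_convex_norm_def by blast
  interpret unorm \<phi> \<gamma> using nf g cv by unfold_locales
  obtain f' :: "'a \<Rightarrow> 'a \<Rightarrow>\<^sub>L real" and f'' :: "'a \<Rightarrow> 'a \<Rightarrow>\<^sub>L ('a \<Rightarrow>\<^sub>L real)" where
    D1: "\<forall>x\<in>UNIV - {0}. (\<phi> has_derivative blinfun_apply (f' x)) (at x)" and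
    D2: "\<forall>x\<in>UNIV - {0}. (f' has_derivative blinfun_apply (f'' x)) (at x)" and
    CC: "continuous_on (UNIV - {0}) f''"
    using assms(2) unfolding C2_on_def by blast
  interpret unorm2 \<phi> \<gamma> f' f'' using D1 D2 CC by unfold_locales auto
  define \<mu> where "\<mu> = (1 + lam) / 2"
  have mu: "1 < \<mu>" "\<mu> < lam" using assms(5) by (auto simp: \<mu>_def)
  define c where "c = LG / (msc * (1 - 1/\<mu>))"
  have c0: "0 \<le> c" using LG0 msc_pos mu by (simp add: c_def)
  show ?thesis
  proof (rule exI[of _ "C * c / \<gamma>"], rule allI, rule impI, rule conjI)
    fix K :: "'a set" assume K: "closed K"
    show "\<forall>a b y. a \<in> K_lst \<phi> K lam s t \<and> y \<in> nearest \<phi> K b \<and> dist_fn \<phi> K b \<le> t \<longrightarrow>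
              \<phi> (the_elem (nearest \<phi> K a) - y) \<le> C * c / \<gamma> * \<phi> (a - b)"
    proof (intro allI impI, elim conjE)
      fix a b y assume a: "a \<in> K_lst \<phi> K lam s t" and y: "y \<in> nearest \<phi> K b"
      note p = part1[OF K a mu assms(3) y]
      have "\<phi> (the_elem (nearest \<phi> K a) - y) = \<phi> (y - (SOME w. w \<in> nearest \<phi> K a))"
      proof -
        have te: "the_elem (nearest \<phi> K a) = (SOME w. w \<in> nearest \<phi> K a)"
          by (subst p(1)) (rule the_elem_eq)
        show ?thesis unfolding te by (rule commute)
      qed
      also have "\<dots> \<le> C * norm (y - (SOME w. w \<in> nearest \<phi> K a))" by (rule upper)
      also have "\<dots> \<le> C * (c * norm (b - a))"
        by (rule mult_left_mono) (use p(2) Cpos in \<open>simp_all add: c_def\<close>)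
      also have "\<dots> \<le> C * (c * (\<phi> (a - b) / \<gamma>))"
      proof -
        have "\<gamma> * norm (b - a) \<le> \<phi> (a - b)" using lower[of "b - a"] commute[of a b] by linarith
        hence "norm (b - a) \<le> \<phi> (a - b) / \<gamma>" using g by (simp add: pos_le_divide_eq mult.commute)
        hence "c * norm (b - a) \<le> c * (\<phi> (a - b) / \<gamma>)" using c0 by (rule mult_left_mono)
        thus ?thesis using Cpos by (intro mult_left_mono[of _ _ C]) simp_all
      qed
      finally show "\<phi> (the_elem (nearest \<phi> K a) - y) \<le> C * c / \<gamma> * \<phi> (a - b)" by simp
    qed
    show "\<exists>L. L-lipschitz_on (K_lst \<phi> K lam s t) (\<lambda>x. the_elem (nearest \<phi> K x))"
    proof (cases "K = {}")
      case True
      show ?thesis by (intro exI[of _ 0]) (simp add: lipschitz_on_def True nearest_def)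
    next
      case False
      show ?thesis
      proof (intro exI[of _ c])
        show "c-lipschitz_on (K_lst \<phi> K lam s t) (\<lambda>x. the_elem (nearest \<phi> K x))"
          unfolding lipschitz_on_def
        proof (intro conjI c0 ballI)
          fix a1 a2 assume a1: "a1 \<in> K_lst \<phi> K lam s t" and a2: "a2 \<in> K_lst \<phi> K lam s t"
          have w2: "(SOME w. w \<in> nearest \<phi> K a2) \<in> nearest \<phi> K a2"
            using ball_prop(1)[OF K False a2 mu assms(3) refl] .
          note p1 = part1[OF K a1 mu assms(3) w2]
          note p2 = part1[OF K a2 mu assms(3) w2]
          show "dist (the_elem (nearest \<phi> K a1)) (the_elem (nearest \<phi> K a2)) \<le> c * dist a1 a2"
          proof -
            have t1: "the_elem (nearest \<phi> K a1) = (SOME w. w \<in> nearest \<phi> K a1)"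
              by (subst p1(1)) (rule the_elem_eq)
            have t2: "the_elem (nearest \<phi> K a2) = (SOME w. w \<in> nearest \<phi> K a2)"
              by (subst p2(1)) (rule the_elem_eq)
            show ?thesis unfolding t1 t2 using p1(2)
            by (simp add: dist_norm c_def norm_minus_commute)
          qed
        qed
      qed
    qed
  qed
qed

end
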